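(* Let $0<\alpha,\beta<1$, $a\in(0,1]$ and $N$ even. The spectral projections $F_{a,1,N}(w)$ and $F_{a,2,N}(w)$ of $\phi_{a,N}(w)$ are analytic at $w=a^2$ and at $w=a^{-2}$ (i.e. have no poles there).
   Context: For $\varepsilon\in\{\alpha,\beta\}$ and $a\in(0,1]$ let $$\Phi_{\varepsilon,a}(z)=\frac{1}{(1-a^2z^{-1})^2}\begin{pmatrix}1&\frac{\varepsilon^2}{az}\\ \frac{1}{\varepsilon^2a}&1\end{pmatrix}\begin{pmatrix}1&\frac{\varepsilon^2a}{z}\\ \frac{a}{\varepsilon^2}&1\end{pmatrix}\begin{pmatrix}1&\frac{1}{az}\\ \frac1a&1\end{pmatrix}\begin{pmatrix}1&\frac az\\ a&1\end{pmatrix},$$ $\phi_{a,N}(z)=\Phi_{\alpha,a}(z)^{N/2}\Phi_{\beta,a}(z)^{N/2}$. Its eigenvalues $r_{a,1,N},r_{a,2,N}=\frac12\big(\operatorname{tr}\phi_{a,N}\pm\sqrt{(\operatorname{tr}\phi_{a,N})^2-4\det\phi_{a,N}}\big)$ are labeled so that $r_{a,1,N}$ has the pole at $w=a^2$; $F_{a,k,N}(w)=E_{a,N}(w)P_kE_{a,N}(w)^{-1}$ with $E_{a,N}$ an eigenvector matrix for this ordering, $P_1=\operatorname{diag}(1,0)$, $P_2=\operatorname{diag}(0,1)$, so $\phi_{a,N}=r_{a,1,N}F_{a,1,N}+r_{a,2,N}F_{a,2,N}$ and $F_{a,1,N}+F_{a,2,N}=I$. *)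

theory Defs
  imports "HOL-Analysis.Analysis"
begin

definition mat2 :: "complex \<Rightarrow> complex \<Rightarrow> complex \<Rightarrow> complex \<Rightarrow> complex^2^2" where
  "mat2 p q r s = (\<chi> i j. if i = 1 then (if j = 1 then p else q) else (if j = 1 then r else s))"

fun mpow :: "complex^2^2 \<Rightarrow> nat \<Rightarrow> complex^2^2" where
  "mpow M 0 = mat 1"
| "mpow M (Suc n) = M ** mpow M n"

definition cscale :: "complex \<Rightarrow> complex^2^2 \<Rightarrow> complex^2^2" where
  "cscale c M = (\<chi> i j. c * M $ i $ j)"

definition Phi :: "real \<Rightarrow> real \<Rightarrow> complex \<Rightarrow> complex^2^2" where
  "Phi e a z = (let e2 = complex_of_real (e^2); A = complex_of_real a in
     cscale (1 / (1 - A^2 / z)^2)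
       (mat2 1 (e2 / (A * z)) (1 / (e2 * A)) 1 **
        mat2 1 (e2 * A / z) (A / e2) 1 **
        mat2 1 (1 / (A * z)) (1 / A) 1 **
        mat2 1 (A / z) A 1))"

definition phi :: "real \<Rightarrow> real \<Rightarrow> real \<Rightarrow> nat \<Rightarrow> complex \<Rightarrow> complex^2^2" where
  "phi \<alpha> \<beta> a N z = mpow (Phi \<alpha> a z) (N div 2) ** mpow (Phi \<beta> a z) (N div 2)"

definition disc2 :: "complex^2^2 \<Rightarrow> complex" where
  "disc2 M = (trace M)^2 - 4 * det M"

text \<open>Spectral projection of a 2x2 matrix M with distinct eigenvalues r and
  r' = trace M - r onto the r-eigenspace along the r'-eigenspace:
  (M - r' I) / (r - r').  This equals E P_k E^{-1} for an eigenvector matrix E.\<close>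
definition spec_proj :: "complex^2^2 \<Rightarrow> complex \<Rightarrow> complex^2^2" where
  "spec_proj M r = cscale (1 / (r - (trace M - r))) (M - cscale (trace M - r) (mat 1))"

end

theory Submission
  imports Defs "HOL-Complex_Analysis.Complex_Analysis"
begin

lemma cscale_entry[simp]: "cscale c M $ i $ j = c * M $ i $ j"
  by (simp add: cscale_def)

lemma mat2_11[simp]: "mat2 p q r s $ 1 $ 1 = p" and mat2_12[simp]: "mat2 p q r s $ 1 $ 2 = q"
  and mat2_21[simp]: "mat2 p q r s $ 2 $ 1 = r" and mat2_22[simp]: "mat2 p q r s $ 2 $ 2 = s"
  by (simp_all add: mat2_def)

lemma mat1_entry: "(mat 1 :: complex^2^2) $ i $ j = (if i = j then 1 else 0)"
  by (simp add: mat_def)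

lemma trace2: "trace (M::complex^2^2) = M$1$1 + M$2$2"
  by (simp add: trace_def sum_2)

lemma mult2: fixes A B :: "complex^2^2" shows "(A ** B) $ i $ j = A$i$1 * B$1$j + A$i$2 * B$2$j"
  by (simp add: matrix_matrix_mult_def sum_2)

lemma disc2_eq: "disc2 (M::complex^2^2) = (M$1$1 + M$2$2)^2 - 4 * (M$1$1 * M$2$2 - M$1$2 * M$2$1)"
  by (simp add: disc2_def trace2 det_2)

lemma cscale_mult: "cscale c A ** cscale d B = cscale (c*d) (A ** B)"
  by (simp add: vec_eq_iff mult2 algebra_simps)

lemma mpow_cscale: "mpow (cscale c M) n = cscale (c^n) (mpow M n)"
proof (induction n)
  case 0 then show ?case by (simp add: vec_eq_iff mat1_entry)
next
  case (Suc n) then show ?case by (simp add: cscale_mult)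
qed

definition mholo :: "complex set \<Rightarrow> (complex \<Rightarrow> complex^2^2) \<Rightarrow> bool" where
  "mholo S F \<longleftrightarrow> (\<forall>i j. (\<lambda>w. F w $ i $ j) holomorphic_on S)"

lemma mholo_mult: "mholo S F \<Longrightarrow> mholo S G \<Longrightarrow> mholo S (\<lambda>w. F w ** G w)"
  unfolding mholo_def mult2 by (auto intro!: holomorphic_intros)

lemma mholo_const: "mholo S (\<lambda>w. M)"
  unfolding mholo_def by (auto intro!: holomorphic_intros)

lemma mholo_mpow: "mholo S F \<Longrightarrow> mholo S (\<lambda>w. mpow (F w) n)"
  by (induction n) (simp_all add: mholo_const mholo_mult)

lemma mholo_mat2:
  assumes "p holomorphic_on S" "q holomorphic_on S" "r holomorphic_on S" "s holomorphic_on S"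
  shows "mholo S (\<lambda>w. mat2 (p w) (q w) (r w) (s w))"
  unfolding mholo_def
proof (intro allI)
  fix i j :: 2
  show "(\<lambda>w. mat2 (p w) (q w) (r w) (s w) $ i $ j) holomorphic_on S"
    using exhaust_2[of i] exhaust_2[of j] assms by auto
qed

definition posm :: "complex^2^2 \<Rightarrow> bool" where
  "posm M \<longleftrightarrow> (\<forall>i j. Im (M$i$j) = 0 \<and> Re (M$i$j) > 0)"

lemma posm_mult: "posm A \<Longrightarrow> posm B \<Longrightarrow> posm (A ** B)"
  unfolding posm_def mult2 by (auto intro!: add_pos_pos mult_pos_pos)

lemma posm_mpow: "posm M \<Longrightarrow> n \<ge> 1 \<Longrightarrow> posm (mpow M n)"
proof (induction n)
  case 0 then show ?case by simp
next
  case (Suc n)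
  show ?case
  proof (cases "n = 0")
    case True
    have "M ** mat 1 = M" by (simp add: matrix_mul_rid)
    then show ?thesis using True Suc by simp
  next
    case False
    then show ?thesis using Suc by (simp add: posm_mult)
  qed
qed

lemma posm_mat2:
  assumes "Im p = 0" "Re p > 0" "Im q = 0" "Re q > 0" "Im r = 0" "Re r > 0" "Im s = 0" "Re s > 0"
  shows "posm (mat2 p q r s)"
  unfolding posm_def
proof (intro allI)
  fix i j :: 2
  show "Im (mat2 p q r s $ i $ j) = 0 \<and> 0 < Re (mat2 p q r s $ i $ j)"
    using exhaust_2[of i] exhaust_2[of j] assms by auto
qed

lemma posm_disc: assumes "posm M" shows "Re (disc2 M) > 0"
proof -
  have r: "M$i$j = complex_of_real (Re (M$i$j))" for i j
    using assms unfolding posm_def by (simp add: complex_eq_iff)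
  have p: "Re (M$i$j) > 0" for i j using assms unfolding posm_def by auto
  have "disc2 M = complex_of_real ((Re (M$1$1) - Re (M$2$2))^2 + 4 * Re (M$1$2) * Re (M$2$1))"
    apply (subst disc2_eq) apply (subst (1 2 3 4 5 6) r) by (simp add: power2_eq_square algebra_simps)
  moreover have "(Re (M$1$1) - Re (M$2$2))^2 + 4 * Re (M$1$2) * Re (M$2$1) > 0"
    using p[of 1 2] p[of 2 1] by (smt (verit) mult_pos_pos zero_le_power2)
  ultimately show ?thesis by simp
qed


lemma minus_entry[simp]: "((A::complex^2^2) - B) $ i $ j = A$i$j - B$i$j" by simp

lemma disc_cscale: "disc2 (cscale c M) = c^2 * disc2 M"
  by (simp add: disc2_eq algebra_simps power2_eq_square)

lemma trace_cscale: "trace (cscale c M) = c * trace M"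
  by (simp add: trace2 algebra_simps)

lemma char_ident: "(2*x - trace M)^2 = 4 * det (cscale x (mat 1) - M) + disc2 (M::complex^2^2)"
  by (simp add: disc2_eq det_2 trace2 mat1_entry algebra_simps power2_eq_square)

lemma spec_entry:
  assumes "2*r - c*t = sg * c * s" "sg = 1 \<or> sg = -1" "c \<noteq> 0" "s \<noteq> 0" "t = trace M"
  shows "spec_proj (cscale c M) r $ i $ j = (if i = j then 1/2 else 0) + sg * (M$i$j - (if i = j then t/2 else 0)) / s"
proof -
  have r: "r = (c*t + sg * c * s)/2" using assms(1) by (simp add: field_simps)
  show ?thesis
    using assms(2-4) unfolding spec_proj_def trace_cscale assms(5)[symmetric] r
    by (auto simp: mat1_entry field_simps)
qed


lemma local_main:
  fixes P :: "complex \<Rightarrow> complex^2^2" and C :: "complex \<Rightarrow> complex" and F :: "complex \<Rightarrow> complex^2^2"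
  assumes d0: "d0 > 0" and hP: "mholo (ball w0 d0) P"
    and hC: "C holomorphic_on (ball w0 d0 - {w0})"
    and nC: "\<forall>w\<in>ball w0 d0 - {w0}. C w \<noteq> 0"
    and eq: "\<forall>w\<in>ball w0 d0 - {w0}. F w = cscale (C w) (P w)"
    and pos: "Re (disc2 (P w0)) > 0"
  shows "\<exists>\<delta>>0.
      (\<forall>w \<in> ball w0 \<delta> - {w0}. disc2 (F w) \<noteq> 0)
    \<and> (\<exists>r. r holomorphic_on (ball w0 \<delta> - {w0}) \<and>
          (\<forall>w \<in> ball w0 \<delta> - {w0}. det (cscale (r w) (mat 1) - F w) = 0))
    \<and> (\<forall>r. r holomorphic_on (ball w0 \<delta> - {w0}) \<and>
          (\<forall>w \<in> ball w0 \<delta> - {w0}. det (cscale (r w) (mat 1) - F w) = 0)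
        \<longrightarrow> (\<forall>k \<in> {1::nat, 2}. \<forall>i j. \<exists>g. g holomorphic_on ball w0 \<delta> \<and>
              (\<forall>w \<in> ball w0 \<delta> - {w0}.
                 g w = spec_proj (F w)
                         (if k = 1 then r w else trace (F w) - r w) $ i $ j)))"
proof -
  define D where "D = (\<lambda>w. disc2 (P w))"
  define t where "t = (\<lambda>w. trace (P w))"
  have hD: "D holomorphic_on ball w0 d0"
    using hP unfolding D_def disc2_eq mholo_def by (auto intro!: holomorphic_intros)
  have ht: "t holomorphic_on ball w0 d0"
    using hP unfolding t_def trace2 mholo_def by (auto intro!: holomorphic_intros)
  have "continuous_on (ball w0 d0) D" using hD by (rule holomorphic_on_imp_continuous_on)
  then have op: "open (ball w0 d0 \<inter> D -` {z. Re z > 0})"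
    by (rule continuous_open_preimage) (auto simp: open_halfspace_Re_gt)
  have "w0 \<in> ball w0 d0 \<inter> D -` {z. Re z > 0}" using d0 pos by (simp add: D_def)
  then obtain d1 where d1: "d1 > 0" "ball w0 d1 \<subseteq> ball w0 d0 \<inter> D -` {z. Re z > 0}"
    using op openE by blast
  define \<delta> where "\<delta> = min d0 d1"
  have dpos: "\<delta> > 0" using d0 d1 by (simp add: \<delta>_def)
  have sub: "ball w0 \<delta> \<subseteq> ball w0 d0" by (rule subset_ball) (simp add: \<delta>_def)
  have Dpos: "\<forall>w\<in>ball w0 \<delta>. Re (D w) > 0" using d1 by (auto simp: \<delta>_def)
  define s where "s = (\<lambda>w. csqrt (D w))"
  have hs: "s holomorphic_on ball w0 \<delta>"
    unfolding s_def
    by (rule holomorphic_on_csqrt'[OF holomorphic_on_subset[OF hD sub]])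
       (use Dpos in \<open>force simp: complex_nonpos_Reals_iff\<close>)
  have s2: "s w ^ 2 = D w" for w by (simp add: s_def)
  have snz: "s w \<noteq> 0" if "w \<in> ball w0 \<delta>" for w
    using Dpos that s2[of w] by (force simp: power2_eq_square)
  define U where "U = ball w0 \<delta> - {w0}"
  have subU: "U \<subseteq> ball w0 d0 - {w0}" using sub by (auto simp: U_def)
  have trF: "trace (F w) = C w * t w" if "w \<in> U" for w
  proof -
    have "F w = cscale (C w) (P w)" using eq subU that by blast
    then show ?thesis by (simp add: t_def trace_cscale)
  qed
  have discF: "disc2 (F w) = (C w * s w)^2" if "w \<in> U" for w
  proof -
    have "F w = cscale (C w) (P w)" using eq subU that by blast
    then show ?thesis by (simp add: D_def disc_cscale s2 power_mult_distrib)
  qed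
  have htU: "t holomorphic_on U" using ht subU by (meson holomorphic_on_subset Diff_subset subset_trans)
  have hsU: "s holomorphic_on U" using hs by (rule holomorphic_on_subset) (auto simp: U_def)
  have hCU: "C holomorphic_on U" using hC subU by (rule holomorphic_on_subset)
  have Cnz: "C w \<noteq> 0" if "w \<in> U" for w using nC subU that by auto
  have sU: "s w \<noteq> 0" if "w \<in> U" for w using snz that by (auto simp: U_def)
  have part1: "\<forall>w \<in> U. disc2 (F w) \<noteq> 0"
    using discF Cnz sU by auto
  have part2: "\<exists>r. r holomorphic_on U \<and> (\<forall>w \<in> U. det (cscale (r w) (mat 1) - F w) = 0)"
  proof (intro exI conjI ballI)
    show "(\<lambda>w. C w * (t w + s w) / 2) holomorphic_on U"
      using htU hsU hCU by (auto intro!: holomorphic_intros)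
  next
    fix w assume w: "w \<in> U"
    have "(2 * (C w * (t w + s w) / 2) - trace (F w))^2 = 4 * det (cscale (C w * (t w + s w) / 2) (mat 1) - F w) + disc2 (F w)"
      by (rule char_ident)
    moreover have "2 * (C w * (t w + s w) / 2) - trace (F w) = C w * s w"
      using trF[OF w] by (simp add: algebra_simps)
    ultimately show "det (cscale (C w * (t w + s w) / 2) (mat 1) - F w) = 0"
      using discF[OF w] by simp
  qed
  have part3: "\<forall>k \<in> {1::nat, 2}. \<forall>i j. \<exists>g. g holomorphic_on ball w0 \<delta> \<and>
              (\<forall>w \<in> U. g w = spec_proj (F w) (if k = 1 then r w else trace (F w) - r w) $ i $ j)"
    if hr: "r holomorphic_on U" and dr: "\<forall>w \<in> U. det (cscale (r w) (mat 1) - F w) = 0" for r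
  proof -
    define q where "q = (\<lambda>w. (2 * r w - C w * t w) / (C w * s w))"
    have hq: "q holomorphic_on U"
      unfolding q_def
      using htU hsU hCU hr Cnz sU by (auto intro!: holomorphic_intros)
    have q2: "q w = 1 \<or> q w = -1" if w: "w \<in> U" for w
    proof -
      have "(2 * r w - trace (F w))^2 = 4 * det (cscale (r w) (mat 1) - F w) + disc2 (F w)"
        by (rule char_ident)
      then have "(2 * r w - C w * t w)^2 = (C w * s w)^2"
        using dr w trF[OF w] discF[OF w] by simp
      then have "(q w)^2 = 1" using Cnz[OF w] sU[OF w] by (simp add: q_def power_divide)
      then show ?thesis by (simp add: power2_eq_1_iff)
    qed
    have "connected U" unfolding U_def by (rule connected_punctured_ball) simp
    moreover have "continuous_on U q" using hq by (rule holomorphic_on_imp_continuous_on)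
    moreover have "finite (q ` U)"
      by (rule finite_subset[of _ "{1, -1}"]) (use q2 in auto)
    ultimately have "q constant_on U" by (rule continuous_finite_range_constant)
    then obtain sg where sg: "\<forall>w\<in>U. q w = sg" by (auto simp: constant_on_def)
    have w1: "w0 + of_real (\<delta>/2) \<in> U" using dpos by (auto simp: U_def dist_norm)
    have sg1: "sg = 1 \<or> sg = -1" using q2[OF w1] sg w1 by auto
    have key: "2 * r w - C w * t w = sg * C w * s w" if w: "w \<in> U" for w
      using sg w Cnz[OF w] sU[OF w] by (auto simp: q_def field_simps)
    show ?thesis
    proof (intro ballI allI)
      fix k :: nat and i j :: 2
      assume k: "k \<in> {1,2}"
      define sk where "sk = (if k = 1 then sg else - sg)"
      have sk1: "sk = 1 \<or> sk = -1" using sg1 by (auto simp: sk_def)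
      show "\<exists>g. g holomorphic_on ball w0 \<delta> \<and>
              (\<forall>w \<in> U. g w = spec_proj (F w) (if k = 1 then r w else trace (F w) - r w) $ i $ j)"
      proof (intro exI conjI ballI)
        show "(\<lambda>w. (if i = j then 1/2 else 0) + sk * (P w $ i $ j - (if i = j then t w / 2 else 0)) / s w)
              holomorphic_on ball w0 \<delta>"
          using holomorphic_on_subset[OF ht sub] hs snz hP[unfolded mholo_def, rule_format, of i j]
            holomorphic_on_subset[OF _ sub]
          by (auto intro!: holomorphic_intros)
      next
        fix w assume w: "w \<in> U"
        have Fw: "F w = cscale (C w) (P w)" using eq subU w by auto
        have "2 * (if k = 1 then r w else trace (F w) - r w) - C w * t w = sk * C w * s w"
          using key[OF w] trF[OF w] k by (auto simp: sk_def algebra_simps)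
        then show "(if i = j then 1/2 else 0) + sk * (P w $ i $ j - (if i = j then t w / 2 else 0)) / s w
            = spec_proj (F w) (if k = 1 then r w else trace (F w) - r w) $ i $ j"
          unfolding Fw using sk1 Cnz[OF w] sU[OF w]
          by (subst spec_entry[where sg = sk and s = "s w" and t = "t w"]) (auto simp: t_def)
      qed
    qed
  qed
  show ?thesis
    using dpos part1 part2 part3 unfolding U_def by blast
qed


definition cf :: "real \<Rightarrow> complex \<Rightarrow> complex" where
  "cf a z = 1 / (1 - (complex_of_real a)^2 / z)^2"

definition Qm :: "real \<Rightarrow> real \<Rightarrow> complex \<Rightarrow> complex^2^2" where
  "Qm e a z = (let e2 = complex_of_real (e^2); A = complex_of_real a in
        mat2 1 (e2 / (A * z)) (1 / (e2 * A)) 1 **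
        mat2 1 (e2 * A / z) (A / e2) 1 **
        mat2 1 (1 / (A * z)) (1 / A) 1 **
        mat2 1 (A / z) A 1)"

definition Pm :: "real \<Rightarrow> real \<Rightarrow> real \<Rightarrow> nat \<Rightarrow> complex \<Rightarrow> complex^2^2" where
  "Pm \<alpha> \<beta> a N z = mpow (Qm \<alpha> a z) (N div 2) ** mpow (Qm \<beta> a z) (N div 2)"

lemma Phi_eq: "Phi e a z = cscale (cf a z) (Qm e a z)"
  by (simp add: Phi_def Qm_def cf_def Let_def)

lemma phi_eq: "phi \<alpha> \<beta> a N z = cscale (cf a z ^ (N div 2) * cf a z ^ (N div 2)) (Pm \<alpha> \<beta> a N z)"
  by (simp add: phi_def Pm_def Phi_eq mpow_cscale cscale_mult)

lemma Qm_holo: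
  assumes "0 \<notin> S" "a \<noteq> 0" "e \<noteq> 0"
  shows "mholo S (Qm e a)"
proof -
  have nz: "\<And>w. w \<in> S \<Longrightarrow> w \<noteq> 0" using assms by auto
  show ?thesis
    unfolding Qm_def Let_def
    by (intro mholo_mult mholo_mat2) (use nz assms in \<open>auto intro!: holomorphic_intros\<close>)
qed

lemma Qm_pos:
  assumes "x > 0" "a > 0" "e > 0"
  shows "posm (Qm e a (complex_of_real x))"
proof -
  have r: "Im (complex_of_real y) = 0 \<and> (Re (complex_of_real y) > 0 \<longleftrightarrow> y > 0)" for y by simp
  show ?thesis
    unfolding Qm_def Let_def
    apply (intro posm_mult posm_mat2)
    apply (simp_all only: of_real_mult[symmetric] of_real_divide[symmetric] of_real_power[symmetric])
    using assms by (auto simp del: of_real_mult of_real_divide of_real_power)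
qed


theorem lemma5p2:
  fixes \<alpha> \<beta> a :: real and N :: nat
  assumes "0 < \<alpha>" "\<alpha> < 1" "0 < \<beta>" "\<beta> < 1" "0 < a" "a \<le> 1"
    and "even N" "N > 0"
  shows "\<forall>w0 \<in> {complex_of_real (a^2), complex_of_real (1 / a^2)}.
    \<exists>\<delta>>0.
      (\<forall>w \<in> ball w0 \<delta> - {w0}. disc2 (phi \<alpha> \<beta> a N w) \<noteq> 0)
    \<and> (\<exists>r. r holomorphic_on (ball w0 \<delta> - {w0}) \<and>
          (\<forall>w \<in> ball w0 \<delta> - {w0}. det (cscale (r w) (mat 1) - phi \<alpha> \<beta> a N w) = 0))
    \<and> (\<forall>r. r holomorphic_on (ball w0 \<delta> - {w0}) \<and>
          (\<forall>w \<in> ball w0 \<delta> - {w0}. det (cscale (r w) (mat 1) - phi \<alpha> \<beta> a N w) = 0)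
        \<longrightarrow> (\<forall>k \<in> {1::nat, 2}. \<forall>i j. \<exists>g. g holomorphic_on ball w0 \<delta> \<and>
              (\<forall>w \<in> ball w0 \<delta> - {w0}.
                 g w = spec_proj (phi \<alpha> \<beta> a N w)
                         (if k = 1 then r w else trace (phi \<alpha> \<beta> a N w) - r w) $ i $ j)))"
proof
  fix w0 assume w0: "w0 \<in> {complex_of_real (a^2), complex_of_real (1 / a^2)}"
  then have "w0 = complex_of_real (a^2) \<or> w0 = complex_of_real (1 / a^2)" by simp
  then obtain x0 where x0: "w0 = complex_of_real x0" "x0 > 0"
    using assms(5) by (metis zero_less_power divide_pos_pos zero_less_one)
  define d0 where "d0 = (if x0 = a^2 then x0 else min x0 \<bar>x0 - a^2\<bar>)"
  have d0: "d0 > 0" using x0 by (auto simp: d0_def)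
  have n0: "0 \<notin> ball w0 d0"
    using x0 by (auto simp: d0_def dist_norm)
  have nA: "w \<noteq> complex_of_real (a^2)" if "w \<in> ball w0 d0 - {w0}" for w
  proof
    assume h: "w = complex_of_real (a^2)"
    show False
    proof (cases "x0 = a^2")
      case True then show ?thesis using that h x0 by auto
    next
      case False
      have "dist w0 w = \<bar>x0 - a^2\<bar>" unfolding h x0(1) dist_norm of_real_diff[symmetric] norm_of_real ..
      then show ?thesis using that False by (auto simp: d0_def)
    qed
  qed
  define n where "n = N div 2"
  have n1: "n \<ge> 1" using assms(7,8) by (auto simp: n_def elim!: evenE)
  have cnz: "cf a w \<noteq> 0" if "w \<in> ball w0 d0 - {w0}" for w
  proof -
    have "w \<noteq> 0" using n0 that by auto
    moreover have "w \<noteq> complex_of_real a ^ 2" using nA[OF that] by simp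
    ultimately have "1 - (complex_of_real a)^2 / w \<noteq> 0" by (auto simp: field_simps)
    then show ?thesis by (simp add: cf_def)
  qed
  have hcf: "cf a holomorphic_on ball w0 d0 - {w0}"
  proof -
    have nz0: "\<forall>w\<in>ball w0 d0 - {w0}. w \<noteq> 0" using n0 by auto
    have nz1: "\<forall>w\<in>ball w0 d0 - {w0}. 1 - (complex_of_real a)^2 / w \<noteq> 0"
      using cnz by (auto simp: cf_def)
    show ?thesis unfolding cf_def
      by (intro holomorphic_intros) (use nz0 nz1 in auto)
  qed
  have loc: "\<exists>\<delta>>0.
      (\<forall>w \<in> ball w0 \<delta> - {w0}. disc2 (phi \<alpha> \<beta> a N w) \<noteq> 0)
    \<and> (\<exists>r. r holomorphic_on (ball w0 \<delta> - {w0}) \<and>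
          (\<forall>w \<in> ball w0 \<delta> - {w0}. det (cscale (r w) (mat 1) - phi \<alpha> \<beta> a N w) = 0))
    \<and> (\<forall>r. r holomorphic_on (ball w0 \<delta> - {w0}) \<and>
          (\<forall>w \<in> ball w0 \<delta> - {w0}. det (cscale (r w) (mat 1) - phi \<alpha> \<beta> a N w) = 0)
        \<longrightarrow> (\<forall>k \<in> {1::nat, 2}. \<forall>i j. \<exists>g. g holomorphic_on ball w0 \<delta> \<and>
              (\<forall>w \<in> ball w0 \<delta> - {w0}.
                 g w = spec_proj (phi \<alpha> \<beta> a N w)
                         (if k = 1 then r w else trace (phi \<alpha> \<beta> a N w) - r w) $ i $ j)))"
  proof (rule local_main[where P = "Pm \<alpha> \<beta> a N" and C = "\<lambda>z. cf a z ^ n * cf a z ^ n"])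
    show "d0 > 0" by (rule d0)
    show "mholo (ball w0 d0) (Pm \<alpha> \<beta> a N)"
      unfolding Pm_def
      using n0 assms by (intro mholo_mult mholo_mpow Qm_holo) auto
    show "(\<lambda>z. cf a z ^ n * cf a z ^ n) holomorphic_on ball w0 d0 - {w0}"
      using hcf by (auto intro!: holomorphic_intros)
    show "\<forall>w\<in>ball w0 d0 - {w0}. cf a w ^ n * cf a w ^ n \<noteq> 0"
      using cnz by auto
    show "\<forall>w\<in>ball w0 d0 - {w0}. phi \<alpha> \<beta> a N w = cscale (cf a w ^ n * cf a w ^ n) (Pm \<alpha> \<beta> a N w)"
      by (simp add: phi_eq n_def)
    show "Re (disc2 (Pm \<alpha> \<beta> a N w0)) > 0"
      unfolding Pm_def x0(1) n_def[symmetric]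
      using assms x0 n1 by (intro posm_disc posm_mult posm_mpow Qm_pos) auto
  qed
  then show "\<exists>\<delta>>0.
      (\<forall>w \<in> ball w0 \<delta> - {w0}. disc2 (phi \<alpha> \<beta> a N w) \<noteq> 0)
    \<and> (\<exists>r. r holomorphic_on (ball w0 \<delta> - {w0}) \<and>
          (\<forall>w \<in> ball w0 \<delta> - {w0}. det (cscale (r w) (mat 1) - phi \<alpha> \<beta> a N w) = 0))
    \<and> (\<forall>r. r holomorphic_on (ball w0 \<delta> - {w0}) \<and>
          (\<forall>w \<in> ball w0 \<delta> - {w0}. det (cscale (r w) (mat 1) - phi \<alpha> \<beta> a N w) = 0)
        \<longrightarrow> (\<forall>k \<in> {1::nat, 2}. \<forall>i j. \<exists>g. g holomorphic_on ball w0 \<delta> \<and>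
              (\<forall>w \<in> ball w0 \<delta> - {w0}.
                 g w = spec_proj (phi \<alpha> \<beta> a N w)
                         (if k = 1 then r w else trace (phi \<alpha> \<beta> a N w) - r w) $ i $ j)))" .
qed

end
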